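(* Let $a=\{a_k\}_{k=0}^\infty$ be a log-convex sequence with $1=a_0>a_1\geq a_2\geq\cdots$, $\lim_{k\to\infty}a_k=0$ and $\sum_{k=0}^\infty a_k=\infty$. Define $\{b_k\}_{k=0}^\infty$ by $b_0=1/a_0$ and $b_k=-\frac{1}{a_0}\sum_{j=0}^{k-1}a_{k-j}b_j$ for $k\geq1$ (the entries of the inverse of the half-infinite lower triangular Toeplitz matrix $A$ with $A_{ij}=a_{i-j}$ for $i\geq j$). Then $\sum_{k=0}^\infty|b_k|=2$; in particular the inverse matrix has summable entries.
   Context: A sequence $\{a_k\}_{k\ge0}$ is log-convex if $a_k\geq0$ for all $k$ and $a_k^2\leq a_{k-1}a_{k+1}$ for all $k\geq1$. *)

theory Defs
  imports "HOL-Analysis.Analysis"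
begin

definition log_convex :: "(nat \<Rightarrow> real) \<Rightarrow> bool" where
  "log_convex a \<longleftrightarrow> (\<forall>k. a k \<ge> 0) \<and> (\<forall>k\<ge>1. (a k)\<^sup>2 \<le> a (k - 1) * a (k + 1))"

end

theory Submission
  imports Defs
begin

theorem theorem5:
  fixes a b :: "nat \<Rightarrow> real"
  assumes "log_convex a"
    and "a 0 = 1" and "a 0 > a 1" and "\<And>k. k \<ge> 1 \<Longrightarrow> a k \<ge> a (k + 1)"
    and "a \<longlonglongrightarrow> 0"
    and "\<not> summable a"
    and "b 0 = 1 / a 0"
    and "\<And>k. k \<ge> 1 \<Longrightarrow> b k = - (1 / a 0) * (\<Sum>j<k. a (k - j) * b j)"
  shows "summable (\<lambda>k. \<bar>b k\<bar>) \<and> (\<Sum>k. \<bar>b k\<bar>) = 2"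
proof -
  note lc = assms(1)[unfolded log_convex_def]
  have nn: "\<And>k. a k \<ge> 0" using lc by blast
  have b0: "b 0 = 1" using assms(2,7) by simp
  have dec1: "\<And>k. a (Suc k) \<le> a k"
  proof -
    fix k show "a (Suc k) \<le> a k"
      using assms(3) assms(4)[of k] by (cases k) auto
  qed
  have decs: "decseq a" by (rule decseq_SucI) (use dec1 in auto)
  have pos: "\<And>k. a k > 0"
  proof (rule ccontr)
    fix m assume "\<not> a m > 0"
    hence am: "a m = 0" using nn[of m] by linarith
    have "\<And>k. a (k + m) = 0"
      using decs am nn by (metis antisym decseqD le_add2)
    hence "summable (\<lambda>k. a (k + m))" by simp
    hence "summable a" by simp
    thus False using assms(6) by blast
  qed
  have lc2: "\<And>k. (a (Suc k))\<^sup>2 \<le> a k * a (Suc (Suc k))"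
    using lc by (metis Suc_eq_plus1 diff_Suc_1 le_add2 plus_1_eq_Suc)
  define r where "r k = a (Suc k) / a k" for k
  have rinc: "incseq r"
  proof (rule incseq_SucI)
    fix k
    have "a (Suc k) * a (Suc k) \<le> a (Suc (Suc k)) * a k" using lc2[of k] by (simp add: power2_eq_square mult.commute)
    thus "r k \<le> r (Suc k)" unfolding r_def using pos[of k] pos[of "Suc k"]
      by (simp add: divide_simps)
  qed
  have coef: "\<And>m n. m \<le> n \<Longrightarrow> a n * a (Suc m) \<le> a (Suc n) * a m"
  proof -
    fix m n :: nat assume "m \<le> n"
    hence "r m \<le> r n" using rinc by (simp add: incseqD)
    thus "a n * a (Suc m) \<le> a (Suc n) * a m" unfolding r_def using pos[of m] pos[of n]
      by (simp add: divide_simps mult.commute)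
  qed
  have E: "\<And>n. n \<ge> 1 \<Longrightarrow> (\<Sum>j\<le>n. a (n - j) * b j) = 0"
  proof -
    fix n :: nat assume "n \<ge> 1"
    have "(\<Sum>j\<le>n. a (n - j) * b j) = a 0 * b n + (\<Sum>j<n. a (n - j) * b j)"
      by (simp add: lessThan_Suc_atMost[symmetric])
    also have "\<dots> = 0" using assms(8)[OF \<open>n \<ge> 1\<close>] assms(2) by simp
    finally show "(\<Sum>j\<le>n. a (n - j) * b j) = 0" .
  qed
  have bneg: "\<And>n. n \<ge> 1 \<Longrightarrow> b n \<le> 0"
  proof -
    fix n :: nat
    show "n \<ge> 1 \<Longrightarrow> b n \<le> 0"
    proof (induction n rule: less_induct)
      case (less n)
      show ?case
      proof (cases "n = 1")
        case True
        then show ?thesis using assms(8)[of 1] assms(2) b0 nn[of 1] by simp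
      next
        case False
        then obtain m where n: "n = Suc m" and m1: "m \<ge> 1" using less.prems
          by (metis One_nat_def Suc_le_D le_SucE not_less_eq_eq)
        have IH: "\<And>j. 1 \<le> j \<Longrightarrow> j \<le> m \<Longrightarrow> b j \<le> 0" using less.IH n by auto
        have Em: "(\<Sum>j\<le>m. a (m - j) * b j) = 0" using E m1 .
        have En: "(\<Sum>j\<le>Suc m. a (Suc m - j) * b j) = 0" using E[of "Suc m"] by simp
        hence "b (Suc m) = - (\<Sum>j\<le>m. a (Suc m - j) * b j)"
          using assms(2) by simp
        hence "a m * b (Suc m) = a m * b (Suc m) + a (Suc m) * (\<Sum>j\<le>m. a (m - j) * b j)"
          using Em by simp
        also have "\<dots> = (\<Sum>j\<le>m. (a (Suc m) * a (m - j) - a m * a (Suc m - j)) * b j)"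
          using \<open>b (Suc m) = _\<close>
          by (simp add: sum_distrib_left sum_subtractf left_diff_distrib algebra_simps)
        also have "\<dots> \<le> 0"
        proof (rule sum_nonpos)
          fix j assume "j \<in> {..m}"
          hence jm: "j \<le> m" by simp
          show "(a (Suc m) * a (m - j) - a m * a (Suc m - j)) * b j \<le> 0"
          proof (cases "j = 0")
            case True thus ?thesis by simp
          next
            case False
            have "Suc m - j = Suc (m - j)" using jm by simp
            hence "a m * a (Suc m - j) \<le> a (Suc m) * a (m - j)"
              using coef[of "m - j" m] by simp
            moreover have "b j \<le> 0" using IH False jm by simp
            ultimately show ?thesis by (simp add: mult_nonneg_nonpos)
          qed
        qed
        finally have "a m * b (Suc m) \<le> 0" .
        thus ?thesis using pos[of m] n by (simp add: mult_le_0_iff)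
      qed
    qed
  qed
  define S where "S N = (\<Sum>j\<le>N. b j)" for N
  define A where "A N = (\<Sum>i\<le>N. a i)" for N
  have Sdec: "decseq S"
    by (rule decseq_SucI) (simp add: S_def bneg)
  have Snn: "\<And>N. S N \<ge> 0"
  proof -
    fix N :: nat
    show "S N \<ge> 0"
    proof (cases "N = 0")
      case True thus ?thesis by (simp add: S_def b0)
    next
      case False
      have "0 = (\<Sum>j\<le>N. a (N - j) * b j)" using E False by simp
      also have "\<dots> \<le> (\<Sum>j\<le>N. a N * b j)"
      proof (rule sum_mono)
        fix j assume "j \<in> {..N}"
        show "a (N - j) * b j \<le> a N * b j"
        proof (cases "j = 0")
          case True thus ?thesis by simp
        next
          case False
          have "a N \<le> a (N - j)" using decs by (simp add: decseqD)
          thus ?thesis using bneg[of j] False by (simp add: mult_right_mono_neg)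
        qed
      qed
      also have "\<dots> = a N * S N" by (simp add: S_def sum_distrib_left)
      finally show ?thesis using pos[of N] by (simp add: zero_le_mult_iff)
    qed
  qed
  have conv: "\<And>N. (\<Sum>j\<le>N. b j * A (N - j)) = 1"
  proof -
    fix N show "(\<Sum>j\<le>N. b j * A (N - j)) = 1"
    proof (induction N)
      case 0 thus ?case by (simp add: A_def b0 assms(2))
    next
      case (Suc N)
      have "(\<Sum>j\<le>Suc N. b j * A (Suc N - j)) = (\<Sum>j\<le>N. b j * A (Suc N - j)) + b (Suc N) * A 0"
        by simp
      also have "(\<Sum>j\<le>N. b j * A (Suc N - j)) = (\<Sum>j\<le>N. b j * A (N - j) + a (Suc N - j) * b j)"
      proof (rule sum.cong)
        fix j assume "j \<in> {..N}"
        hence "Suc N - j = Suc (N - j)" by simp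
        thus "b j * A (Suc N - j) = b j * A (N - j) + a (Suc N - j) * b j"
          by (simp add: A_def algebra_simps)
      qed simp
      also have "\<dots> = 1 + (\<Sum>j\<le>N. a (Suc N - j) * b j)" by (simp add: sum.distrib Suc.IH)
      finally have "(\<Sum>j\<le>Suc N. b j * A (Suc N - j)) = 1 + ((\<Sum>j\<le>N. a (Suc N - j) * b j) + a 0 * b (Suc N))"
        by (simp add: A_def assms(2))
      also have "(\<Sum>j\<le>N. a (Suc N - j) * b j) + a 0 * b (Suc N) = (\<Sum>j\<le>Suc N. a (Suc N - j) * b j)"
        by simp
      also have "\<dots> = 0" using E[of "Suc N"] by simp
      finally show ?case by simp
    qed
  qed
  have SA: "\<And>N. A N * S N \<le> 1"
  proof -
    fix N
    have "A N * S N = (\<Sum>j\<le>N. b j * A N)" by (simp add: S_def sum_distrib_left mult.commute)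
    also have "\<dots> \<le> (\<Sum>j\<le>N. b j * A (N - j))"
    proof (rule sum_mono)
      fix j assume "j \<in> {..N}"
      show "b j * A N \<le> b j * A (N - j)"
      proof (cases "j = 0")
        case True thus ?thesis by simp
      next
        case False
        have "A (N - j) \<le> A N" unfolding A_def
          by (rule sum_mono2) (auto simp: nn)
        thus ?thesis using bneg[of j] False by (simp add: mult_left_mono_neg)
      qed
    qed
    also have "\<dots> = 1" by (rule conv)
    finally show "A N * S N \<le> 1" .
  qed
  obtain L where L: "S \<longlonglongrightarrow> L" "\<forall>i. L \<le> S i"
    using decseq_convergent[OF Sdec, of 0] Snn by blast
  have "L \<ge> 0" using L(1) Snn by (meson LIMSEQ_le_const)
  have L0: "L = 0"
  proof (rule ccontr)
    assume "L \<noteq> 0"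
    hence Lp: "L > 0" using \<open>L \<ge> 0\<close> by simp
    have "\<And>N. (\<Sum>k\<le>N. a k) \<le> 1 / L"
    proof -
      fix N
      have "A N * L \<le> A N * S N"
        using L(2) by (intro mult_left_mono) (auto simp: A_def nn sum_nonneg)
      also have "\<dots> \<le> 1" by (rule SA)
      finally show "(\<Sum>k\<le>N. a k) \<le> 1 / L" using Lp by (simp add: A_def divide_simps)
    qed
    hence "summable a" by (rule bounded_imp_summable[OF nn])
    thus False using assms(6) by blast
  qed
  have part: "\<And>N. (\<Sum>k\<le>N. \<bar>b k\<bar>) = 2 - S N"
  proof -
    fix N show "(\<Sum>k\<le>N. \<bar>b k\<bar>) = 2 - S N"
    proof (induction N)
      case 0 thus ?case by (simp add: S_def b0)
    next
      case (Suc N)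
      thus ?case using bneg[of "Suc N"] by (simp add: S_def)
    qed
  qed
  have "(\<lambda>N. 2 - S N) \<longlonglongrightarrow> 2 - 0"
    using L(1) L0 by (intro tendsto_intros) auto
  hence "(\<lambda>k. \<bar>b k\<bar>) sums 2" unfolding sums_def_le part by simp
  thus ?thesis by (simp add: sums_iff)
qed

end
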